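(* Let $\mathbb{F}$ be an algebraically closed field and $V$ a $2m$-dimensional $\mathbb{F}$-vector space with a split nondegenerate quadratic form, with isometry group $O(V)$. Let $A\le O(V)$ be a finite abelian group of odd order not divisible by the characteristic of $\mathbb{F}$. (i) If some nontrivial linear character of $A$ occurs in $V$ with multiplicity at least $2$, then the centralizer $C_{O(V)}(A)$ contains a root group of $O(V)$. (ii) If the trivial character of $A$ occurs in $V$ with multiplicity at least $4$, then $C_{O(V)}(A)$ contains a root group of $O(V)$.
   Context: Let $B$ be the symmetric bilinear form associated with the quadratic form. A root group of $O(V)$ is a subgroup of the form $\{x\mapsto x+t(B(x,w)u-B(x,u)w): t\in\mathbb{F}\}$, where $u,w$ span a $2$-dimensional totally singular subspace of $V$. The multiplicity of a linear character $\lambda$ of $A$ in $V$ is the dimension of $\{v\in V: av=\lambda(a)v \text{ for all } a\in A\}$. *)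

theory Defs
  imports "HOL-Analysis.Analysis" "HOL-Computational_Algebra.Polynomial"
begin

definition polar :: "('a::field ^ 'n \<Rightarrow> 'a) \<Rightarrow> 'a ^ 'n \<Rightarrow> 'a ^ 'n \<Rightarrow> 'a" where
  "polar Q x y = Q (x + y) - Q x - Q y"

definition quadratic_form :: "('a::field ^ 'n \<Rightarrow> 'a) \<Rightarrow> bool" where
  "quadratic_form Q \<longleftrightarrow>
     (\<forall>c x. Q (c *s x) = c ^ 2 * Q x) \<and>
     (\<forall>x y z. polar Q (x + y) z = polar Q x z + polar Q y z) \<and>
     (\<forall>c x y. polar Q (c *s x) y = c * polar Q x y)"

definition nondegenerate_qf :: "('a::field ^ 'n \<Rightarrow> 'a) \<Rightarrow> bool" where
  "nondegenerate_qf Q \<longleftrightarrow> (\<forall>x. (\<forall>y. polar Q x y = 0) \<longrightarrow> x = 0)"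

definition totally_singular :: "('a::field ^ 'n \<Rightarrow> 'a) \<Rightarrow> ('a ^ 'n) set \<Rightarrow> bool" where
  "totally_singular Q W \<longleftrightarrow> vec.subspace W \<and> (\<forall>v\<in>W. Q v = 0)"

text \<open>split of Witt index m, where dim V = 2m\<close>
definition split_qf :: "('a::field ^ 'n \<Rightarrow> 'a) \<Rightarrow> nat \<Rightarrow> bool" where
  "split_qf Q m \<longleftrightarrow> (\<exists>W. totally_singular Q W \<and> vec.dim W = m)"

definition isometry_group :: "('a::field ^ 'n \<Rightarrow> 'a) \<Rightarrow> ('a ^ 'n \<Rightarrow> 'a ^ 'n) set" where
  "isometry_group Q = {g. Vector_Spaces.linear (*s) (*s) g \<and> bij g \<and> (\<forall>x. Q (g x) = Q x)}"

definition root_elt :: "('a::field ^ 'n \<Rightarrow> 'a) \<Rightarrow> 'a ^ 'n \<Rightarrow> 'a ^ 'n \<Rightarrow> 'a \<Rightarrow> 'a ^ 'n \<Rightarrow> 'a ^ 'n" where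
  "root_elt Q u w t = (\<lambda>x. x + t *s (polar Q x w *s u - polar Q x u *s w))"

definition root_group :: "('a::field ^ 'n \<Rightarrow> 'a) \<Rightarrow> 'a ^ 'n \<Rightarrow> 'a ^ 'n \<Rightarrow> ('a ^ 'n \<Rightarrow> 'a ^ 'n) set" where
  "root_group Q u w = range (root_elt Q u w)"

definition is_root_group :: "('a::field ^ 'n \<Rightarrow> 'a) \<Rightarrow> ('a ^ 'n \<Rightarrow> 'a ^ 'n) set \<Rightarrow> bool" where
  "is_root_group Q R \<longleftrightarrow> (\<exists>u w. vec.dim (vec.span {u, w}) = 2 \<and>
      totally_singular Q (vec.span {u, w}) \<and> R = root_group Q u w)"

definition centralizer :: "('a ^ 'n \<Rightarrow> 'a ^ 'n) set \<Rightarrow> ('a ^ 'n \<Rightarrow> 'a ^ 'n) set \<Rightarrow> ('a ^ 'n \<Rightarrow> 'a ^ 'n) set" where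
  "centralizer G A = {g \<in> G. \<forall>a\<in>A. g \<circ> a = a \<circ> g}"

definition finite_abelian_subgroup :: "('v \<Rightarrow> 'v) set \<Rightarrow> ('v \<Rightarrow> 'v) set \<Rightarrow> bool" where
  "finite_abelian_subgroup A G \<longleftrightarrow> A \<subseteq> G \<and> finite A \<and> id \<in> A \<and>
     (\<forall>f\<in>A. \<forall>g\<in>A. f \<circ> g \<in> A) \<and> (\<forall>f\<in>A. inv f \<in> A) \<and>
     (\<forall>f\<in>A. \<forall>g\<in>A. f \<circ> g = g \<circ> f)"

definition linear_character :: "('a::field ^ 'n \<Rightarrow> 'a ^ 'n) set \<Rightarrow> (('a ^ 'n \<Rightarrow> 'a ^ 'n) \<Rightarrow> 'a) \<Rightarrow> bool" where
  "linear_character A chi \<longleftrightarrow> (\<forall>a\<in>A. chi a \<noteq> 0) \<and> (\<forall>a\<in>A. \<forall>b\<in>A. chi (a \<circ> b) = chi a * chi b)"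

definition multiplicity_char :: "('a::field ^ 'n \<Rightarrow> 'a ^ 'n) set \<Rightarrow> (('a ^ 'n \<Rightarrow> 'a ^ 'n) \<Rightarrow> 'a) \<Rightarrow> nat" where
  "multiplicity_char A chi = vec.dim {v. \<forall>a\<in>A. a v = chi a *s v}"

end

theory Submission
  imports Defs
begin


context
  fixes Q :: "'a::field ^ 'n \<Rightarrow> 'a"
  assumes qf: "quadratic_form Q"
begin

lemma Q_scale: "Q (c *s x) = c^2 * Q x"
  using qf unfolding quadratic_form_def by blast
lemma polar_sym: "polar Q x y = polar Q y x"
  unfolding polar_def by (simp add: add.commute)
lemma polar_add_l: "polar Q (x + y) z = polar Q x z + polar Q y z"
  using qf unfolding quadratic_form_def by blast
lemma polar_scale_l: "polar Q (c *s x) y = c * polar Q x y"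
  using qf unfolding quadratic_form_def by blast
lemma polar_add_r: "polar Q z (x + y) = polar Q z x + polar Q z y"
  using polar_add_l[of x y z] polar_sym[of z "x+y"] polar_sym[of x z] polar_sym[of y z] by simp
lemma polar_scale_r: "polar Q y (c *s x) = c * polar Q y x"
  using polar_scale_l[of c x y] polar_sym[of y "c *s x"] polar_sym[of x y] by simp
lemma polar_neg_l: "polar Q (- x) y = - polar Q x y"
  using polar_scale_l[of "-1" x y] by simp
lemma polar_neg_r: "polar Q y (- x) = - polar Q y x"
  using polar_scale_r[of y "-1" x] by simp
lemma polar_diff_l: "polar Q (x - z) y = polar Q x y - polar Q z y"
  using polar_add_l[of x "-z" y] polar_neg_l by simp
lemma polar_diff_r: "polar Q y (x - z) = polar Q y x - polar Q y z"
  using polar_add_r[of y x "-z"] polar_neg_r by simp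
lemma Q_0: "Q 0 = 0"
  using Q_scale[of 0 0] by simp
lemma Q_neg: "Q (- x) = Q x"
  using Q_scale[of "-1" x] by simp
lemma polar_0_l: "polar Q 0 y = 0"
  using polar_scale_l[of 0 0 y] by simp
lemma polar_0_r: "polar Q y 0 = 0"
  using polar_scale_r[of y 0 0] by simp
lemma Q_add: "Q (x + y) = Q x + Q y + polar Q x y"
  unfolding polar_def by simp
lemma polar_self: "polar Q x x = 2 * Q x"
proof -
  have e: "x + x = (2::'a) *s x" by (simp add: vec_eq_iff)
  have "Q (x + x) = 4 * Q x" unfolding e using Q_scale[of 2 x] by simp
  then show ?thesis unfolding polar_def by simp
qed


lemma iso_lin: "g \<in> isometry_group Q \<Longrightarrow> Vector_Spaces.linear (*s) (*s) g"
  unfolding isometry_group_def by blast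
lemma iso_Q: "g \<in> isometry_group Q \<Longrightarrow> Q (g x) = Q x"
  unfolding isometry_group_def by blast
lemma iso_polar: "g \<in> isometry_group Q \<Longrightarrow> polar Q (g x) (g y) = polar Q x y"
  proof -
  assume g: "g \<in> isometry_group Q"
  have "g x + g y = g (x + y)" using vec.linear_add[OF iso_lin[OF g]] by simp
  then show ?thesis unfolding polar_def using iso_Q[OF g] by simp
qed

lemma root_polar:
  assumes "polar Q u w = 0" "Q u = 0" "Q w = 0"
  shows "polar Q (root_elt Q u w t x) w = polar Q x w"
        "polar Q (root_elt Q u w t x) u = polar Q x u"
  using assms unfolding root_elt_def
  by (simp_all add: polar_add_l polar_diff_l polar_scale_l polar_self polar_sym[of w u])

lemma root_iso:
  assumes "polar Q u w = 0" "Q u = 0" "Q w = 0"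
  shows "root_elt Q u w t \<in> isometry_group Q"
proof -
  have lin: "Vector_Spaces.linear (*s) (*s) (root_elt Q u w t)"
  proof -
    have "root_elt Q u w t (x + y) = root_elt Q u w t x + root_elt Q u w t y" for x y
      by (simp add: root_elt_def polar_add_l vec_eq_iff algebra_simps)
    moreover have "root_elt Q u w t (c *s x) = c *s root_elt Q u w t x" for c x
      by (simp add: root_elt_def polar_scale_l vec_eq_iff algebra_simps)
    ultimately show ?thesis unfolding Vector_Spaces.linear_iff
      using vec.vector_space_axioms by blast
  qed
  have inv: "root_elt Q u w (-t) (root_elt Q u w t x) = x" for t x
    using root_polar[OF assms, of t x] unfolding root_elt_def
    by (simp add: algebra_simps)
  have b: "bij (root_elt Q u w t)"
    by (rule o_bij[of "root_elt Q u w (-t)"]) (use inv[of t] inv[of "-t"] in auto)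
  have q: "Q (root_elt Q u w t x) = Q x" for x
  proof -
    let ?D = "polar Q x w *s u - polar Q x u *s w"
    have QD: "Q ?D = 0"
    proof -
      have "Q ?D = Q (polar Q x w *s u) + Q (- (polar Q x u *s w)) + polar Q (polar Q x w *s u) (- (polar Q x u *s w))"
        unfolding diff_conv_add_uminus by (rule Q_add)
      also have "\<dots> = 0"
        using assms by (simp add: Q_neg Q_scale polar_neg_r polar_scale_l polar_scale_r)
      finally show ?thesis .
    qed
    have PD: "polar Q x ?D = 0"
      by (simp add: polar_diff_r polar_scale_r polar_sym[of x u] polar_sym[of x w])
    have "Q (root_elt Q u w t x) = Q x + Q (t *s ?D) + polar Q x (t *s ?D)"
      unfolding root_elt_def by (rule Q_add)
    also have "\<dots> = Q x" unfolding Q_scale polar_scale_r QD PD by simp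
    finally show ?thesis .
  qed
  show ?thesis unfolding isometry_group_def using lin b q by blast
qed

lemma root_comm:
  assumes a: "a \<in> isometry_group Q" and c: "c \<noteq> 0"
    and au: "a u = c *s u" and aw: "a w = inverse c *s w"
  shows "a \<circ> root_elt Q u w t = root_elt Q u w t \<circ> a"
proof
  fix x
  have lin: "Vector_Spaces.linear (*s) (*s) a" using iso_lin[OF a] .
  have w': "w = a (c *s w)" using c aw vec.linear_scale[OF lin, of c w] by simp
  have u': "u = a (inverse c *s u)" using c au vec.linear_scale[OF lin, of "inverse c" u] by simp
  have pw: "polar Q (a x) w = c * polar Q x w"
  proof -
    have "polar Q (a x) w = polar Q (a x) (a (c *s w))" by (rule arg_cong[OF w'])
    also have "\<dots> = polar Q x (c *s w)" by (rule iso_polar[OF a])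
    also have "\<dots> = c * polar Q x w" by (rule polar_scale_r)
    finally show ?thesis .
  qed
  have pu: "polar Q (a x) u = inverse c * polar Q x u"
  proof -
    have "polar Q (a x) u = polar Q (a x) (a (inverse c *s u))" by (rule arg_cong[OF u'])
    also have "\<dots> = polar Q x (inverse c *s u)" by (rule iso_polar[OF a])
    also have "\<dots> = inverse c * polar Q x u" by (rule polar_scale_r)
    finally show ?thesis .
  qed
  have l: "a (root_elt Q u w t x) = a x + t *s (polar Q x w *s (c *s u) - polar Q x u *s (inverse c *s w))"
    unfolding root_elt_def
    by (simp only: vec.linear_add[OF lin] vec.linear_diff[OF lin] vec.linear_scale[OF lin] au aw)
  have r: "root_elt Q u w t (a x) = a x + t *s ((c * polar Q x w) *s u - (inverse c * polar Q x u) *s w)"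
    unfolding root_elt_def pw pu ..
  show "(a \<circ> root_elt Q u w t) x = (root_elt Q u w t \<circ> a) x"
    unfolding o_def l r by (simp add: vector_smult_assoc mult.commute)
qed


lemma polar_sum_l: "polar Q (sum f S) y = (\<Sum>s\<in>S. polar Q (f s) y)"
proof (cases "finite S")
  case True then show ?thesis
    by (induction S rule: finite_induct) (auto simp: polar_0_l polar_add_l)
qed (simp add: polar_0_l)

lemma span2_singular:
  assumes "Q u = 0" "Q w = 0" "polar Q u w = 0" "v \<in> vec.span {u, w}"
  shows "Q v = 0"
proof -
  from assms(4) obtain k k' where "v - k *s u = k' *s w"
    unfolding vec.span_insert vec.span_singleton by auto
  then have "v = k *s u + k' *s w" by (simp add: algebra_simps)
  then show ?thesis using assms
    by (simp add: Q_add Q_scale polar_scale_l polar_scale_r)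
qed

lemma indep_pair:
  assumes "u \<noteq> 0" "w \<notin> vec.span {u}"
  shows "vec.independent {w, u}" "w \<noteq> u"
proof -
  have "vec.independent {u}" using assms(1) vec.dependent_single by blast
  moreover have "w \<notin> {u}" using assms(2) vec.span_base[of u "{u}"] by auto
  ultimately show "vec.independent {w, u}" using assms(2) by (simp add: vec.independent_insert)
  show "w \<noteq> u" using assms(2) vec.span_base[of u "{u}"] by auto
qed

lemma root_found:
  assumes "Q u = 0" "Q w = 0" "polar Q u w = 0" "vec.independent {u, w}" "u \<noteq> w"
    and AG: "A \<subseteq> isometry_group Q"
    and act: "\<forall>a\<in>A. \<exists>c. c \<noteq> 0 \<and> a u = c *s u \<and> a w = inverse c *s w"
  shows "\<exists>R. is_root_group Q R \<and> R \<subseteq> centralizer (isometry_group Q) A"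
proof -
  have d: "vec.dim (vec.span {u, w}) = 2"
    using vec.dim_span_eq_card_independent[OF assms(4)] assms(5) by simp
  have sg: "\<forall>v\<in>vec.span {u, w}. Q v = 0" using span2_singular assms(1-3) by blast
  have ts: "totally_singular Q (vec.span {u, w})"
    unfolding totally_singular_def using sg vec.subspace_span by blast
  have "is_root_group Q (root_group Q u w)"
    unfolding is_root_group_def by (rule exI[of _ u], rule exI[of _ w]) (use d ts in simp)
  moreover
  have "root_group Q u w \<subseteq> centralizer (isometry_group Q) A"
  proof
    fix r assume "r \<in> root_group Q u w"
    then obtain t where r: "r = root_elt Q u w t" unfolding root_group_def by auto
    have "r \<in> isometry_group Q" unfolding r by (rule root_iso[OF assms(3,1,2)])
    moreover have "r \<circ> a = a \<circ> r" if aA: "a \<in> A" for a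
    proof -
      obtain c where "c \<noteq> 0 \<and> a u = c *s u \<and> a w = inverse c *s w" using bspec[OF act aA] by (erule exE)
      then have "a \<circ> r = r \<circ> a" unfolding r using root_comm[of a c u w t] AG aA by auto
      then show ?thesis by simp
    qed
    ultimately show "r \<in> centralizer (isometry_group Q) A" unfolding centralizer_def by simp
  qed
  ultimately show ?thesis by blast
qed

lemma eigen_subspace:
  assumes "A \<subseteq> isometry_group Q"
  shows "vec.subspace {v. \<forall>a\<in>A. a v = chi a *s v}"
  unfolding vec.subspace_def
proof (intro conjI ballI allI)
  have l: "\<And>a. a \<in> A \<Longrightarrow> Vector_Spaces.linear (*s) (*s) a" using assms iso_lin by blast
  show "0 \<in> {v. \<forall>a\<in>A. a v = chi a *s v}" using vec.linear_0[OF l] by simp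
  fix x y c assume x: "x \<in> {v. \<forall>a\<in>A. a v = chi a *s v}" and y: "y \<in> {v. \<forall>a\<in>A. a v = chi a *s v}"
  show "x + y \<in> {v. \<forall>a\<in>A. a v = chi a *s v}"
    using x y vec.linear_add[OF l] by (simp add: vector_add_ldistrib)
  show "c *s x \<in> {v. \<forall>a\<in>A. a v = chi a *s v}"
  proof (clarify)
    fix a assume a: "a \<in> A"
    have "a (c *s x) = c *s (chi a *s x)" using x a vec.linear_scale[OF l[OF a]] by simp
    also have "\<dots> = chi a *s (c *s x)" by (simp add: vector_smult_assoc mult.commute)
    finally show "a (c *s x) = chi a *s (c *s x)" .
  qed
qed

end

lemma two_elems:
  assumes "finite B" "2 \<le> card B"
  obtains y z where "y \<in> B" "z \<in> B" "y \<noteq> z"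
proof -
  have "B \<noteq> {}" using assms by (intro notI) simp
  then obtain y where y: "y \<in> B" by blast
  have "card (B - {y}) \<ge> 1" using assms y by (simp add: card_Diff_singleton)
  then have "B - {y} \<noteq> {}" by (intro notI) simp
  then obtain z where z: "z \<in> B - {y}" by blast
  have "z \<in> B" "y \<noteq> z" using z by auto
  then show ?thesis by (rule that[OF y])
qed

lemma two_indep:
  assumes "2 \<le> vec.dim S"
  obtains x y where "x \<in> S" "y \<in> S" "x \<noteq> y" "vec.independent {x, y}"
proof -
  obtain B where B: "B \<subseteq> S" "vec.independent B" "S \<subseteq> vec.span B" "card B = vec.dim S"
    by (rule vec.basis_exists[of S])
  have fin: "finite B" using B(2) by (rule vec.finiteI_independent)
  have c2: "2 \<le> card B" using B(4) assms by simp
  obtain x y where xy: "x \<in> B" "y \<in> B" "x \<noteq> y" by (rule two_elems[OF fin c2])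
  have "{x, y} \<subseteq> B" using xy by simp
  then have i: "vec.independent {x, y}" by (rule vec.independent_mono[OF B(2)])
  have "x \<in> S" "y \<in> S" using xy B(1) by auto
  then show ?thesis using xy(3) i by (rule that)
qed

lemma quad_root:
  fixes Q :: "'a::alg_closed_field ^ 'n \<Rightarrow> 'a"
  assumes qf: "quadratic_form Q" and ind: "vec.independent {y, z}" and yz: "y \<noteq> z"
  shows "\<exists>v\<in>vec.span {y, z}. v \<noteq> 0 \<and> Q v = 0"
proof (cases "Q z = 0")
  case True
  have "z \<noteq> 0" using ind vec.dependent_zero by auto
  then show ?thesis using True vec.span_base[of z "{y,z}"] by auto
next
  case False
  let ?f = "\<lambda>k::nat. if k = 0 then Q y else if k = 1 then polar Q y z else Q z"
  obtain x where "(\<Sum>k\<le>2. ?f k * x ^ k) = 0"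
    using alg_closed[of 2 ?f] False by auto
  moreover have "(\<Sum>k\<le>2. ?f k * x ^ k) = Q y + polar Q y z * x + Q z * x^2"
    by (simp add: numeral_2_eq_2 atMost_Suc)
  ultimately have r: "Q y + polar Q y z * x + Q z * x^2 = 0" by simp
  let ?v = "y + x *s z"
  have "Q ?v = Q y + Q (x *s z) + polar Q y (x *s z)" by (rule Q_add[OF qf])
  also have "\<dots> = Q y + polar Q y z * x + Q z * x^2"
    unfolding Q_scale[OF qf] polar_scale_r[OF qf] by (simp add: mult.commute)
  finally have "Q ?v = 0" using r by simp
  moreover have "?v \<in> vec.span {y, z}"
    by (intro vec.span_add vec.span_scale vec.span_base) auto
  moreover have "?v \<noteq> 0"
  proof
    assume "?v = 0"
    then have "y = (- x) *s z" by (simp add: eq_neg_iff_add_eq_0)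
    moreover have "(- x) *s z \<in> vec.span {z}" by (intro vec.span_scale vec.span_base) simp
    ultimately have "y \<in> vec.span {z}" by (simp only:)
    then show False using ind yz vec.independent_insert[of y "{z}"] by auto
  qed
  ultimately show ?thesis by blast
qed




lemma kernel_subspace:
  assumes qf: "quadratic_form Q"
  shows "vec.subspace {v. polar Q u v = 0}"
  unfolding vec.subspace_def
  by (simp add: polar_add_r[OF qf] polar_scale_r[OF qf] polar_0_r[OF qf])

theorem lemmaD1:
  fixes Q :: "'a::alg_closed_field ^ 'n \<Rightarrow> 'a"
    and m :: nat
    and A :: "('a ^ 'n \<Rightarrow> 'a ^ 'n) set"
  assumes dimV: "CARD('n) = 2 * m"
    and qf: "quadratic_form Q"
    and nondeg: "nondegenerate_qf Q"
    and split: "split_qf Q m"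
    and subgrp: "finite_abelian_subgroup A (isometry_group Q)"
    and odd_ord: "odd (card A)"
    and char_ndvd: "\<not> CHAR('a) dvd card A"
  shows "(\<forall>chi. linear_character A chi \<and> (\<exists>a\<in>A. chi a \<noteq> 1) \<and> multiplicity_char A chi \<ge> 2 \<longrightarrow>
            (\<exists>R. is_root_group Q R \<and> R \<subseteq> centralizer (isometry_group Q) A))
       \<and> (multiplicity_char A (\<lambda>_. 1) \<ge> 4 \<longrightarrow>
            (\<exists>R. is_root_group Q R \<and> R \<subseteq> centralizer (isometry_group Q) A))"
proof -
  have AG: "A \<subseteq> isometry_group Q" and finA: "finite A"
    and clos: "\<And>f g. f \<in> A \<Longrightarrow> g \<in> A \<Longrightarrow> f \<circ> g \<in> A"
    using subgrp unfolding finite_abelian_subgroup_def by blast+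
  have lin: "\<And>a. a \<in> A \<Longrightarrow> Vector_Spaces.linear (*s) (*s) a" using AG iso_lin[OF qf] by blast
  have bijA: "\<And>a. a \<in> A \<Longrightarrow> bij a" using AG unfolding isometry_group_def by blast
  have injT: "inj_on (\<lambda>b. a \<circ> b) A" if a: "a \<in> A" for a
  proof
    fix b c assume "b \<in> A" "c \<in> A" and e: "a \<circ> b = a \<circ> c"
    have "a (b x) = a (c x)" for x using fun_cong[OF e, of x] by simp
    then have "b x = c x" for x using bij_is_inj[OF bijA[OF a]] by (simp add: inj_eq)
    then show "b = c" by (rule ext)
  qed
  have imT: "(\<lambda>b. a \<circ> b) ` A = A" if a: "a \<in> A" for a
  proof -
    have "(\<lambda>b. a \<circ> b) ` A \<subseteq> A" using clos a by auto
    moreover have "card ((\<lambda>b. a \<circ> b) ` A) = card A" using card_image[OF injT[OF a]] .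
    ultimately show ?thesis using card_subset_eq finA by blast
  qed
  have Nnz: "(of_nat (card A) :: 'a) \<noteq> 0" using char_ndvd by (simp add: of_nat_eq_0_iff_char_dvd)
  have part1: "\<exists>R. is_root_group Q R \<and> R \<subseteq> centralizer (isometry_group Q) A"
    if H: "linear_character A chi" "\<exists>a\<in>A. chi a \<noteq> 1" "multiplicity_char A chi \<ge> 2" for chi
  proof -
    have nz: "\<And>a. a \<in> A \<Longrightarrow> chi a \<noteq> 0"
      and hom: "\<And>a b. a \<in> A \<Longrightarrow> b \<in> A \<Longrightarrow> chi (a \<circ> b) = chi a * chi b"
      using H(1) unfolding linear_character_def by auto
    obtain a0 where a0: "a0 \<in> A" "chi a0 \<noteq> 1" using H(2) by blast
    have powN: "chi a ^ card A = 1" if a: "a \<in> A" for a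
    proof -
      have "prod chi A = prod chi ((\<lambda>b. a \<circ> b) ` A)" using imT[OF a] by simp
      also have "\<dots> = (\<Prod>b\<in>A. chi (a \<circ> b))" using prod.reindex[OF injT[OF a]] by (simp add: o_def)
      also have "\<dots> = (\<Prod>b\<in>A. chi a * chi b)" using hom a by (intro prod.cong) auto
      also have "\<dots> = chi a ^ card A * prod chi A" by (simp add: prod.distrib)
      finally have "prod chi A = chi a ^ card A * prod chi A" .
      moreover have "prod chi A \<noteq> 0" using nz finA by (simp add: prod_zero_iff)
      ultimately show ?thesis by simp
    qed
    define L where "L = chi a0"
    have Lnz: "L \<noteq> 0" using nz[OF a0(1)] L_def by simp
    have L2: "L ^ 2 \<noteq> 1"
    proof
      assume sq: "L ^ 2 = 1"
      obtain k where k: "card A = 2 * k + 1" by (rule oddE[OF odd_ord])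
      have "L ^ card A = L" unfolding k by (simp add: power_add power_mult sq)
      then show False using powN[OF a0(1)] a0(2) L_def by simp
    qed
    define E where "E = {v. \<forall>a\<in>A. a v = chi a *s v}"
    have subE: "vec.subspace E" unfolding E_def by (rule eigen_subspace[OF qf AG])
    have "2 \<le> vec.dim E" using H(3) unfolding multiplicity_char_def E_def .
    then obtain u1 u2 where u12: "u1 \<in> E" "u2 \<in> E" "u1 \<noteq> u2" "vec.independent {u1, u2}"
      by (rule two_indep)
    have u1nz: "u1 \<noteq> 0" using u12(4) vec.dependent_zero by blast
    obtain x where x0: "polar Q u1 x \<noteq> 0"
      using nondeg u1nz unfolding nondegenerate_qf_def by blast
    have x: "polar Q x u1 \<noteq> 0" using x0 polar_sym[OF qf, of x u1] by simp
    define w where "w = (\<Sum>b\<in>A. chi b *s b x)"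
    have wE: "a w = inverse (chi a) *s w" if a: "a \<in> A" for a
    proof -
      have "a w = (\<Sum>b\<in>A. chi b *s a (b x))"
        unfolding w_def by (simp add: vec.linear_sum[OF lin[OF a]] vec.linear_scale[OF lin[OF a]])
      also have "\<dots> = (\<Sum>c\<in>A. (inverse (chi a) * chi c) *s c x)"
      proof (rule sym, rule sum.reindex_cong[OF injT[OF a] imT[OF a, symmetric]])
        fix b assume b: "b \<in> A"
        have "inverse (chi a) * chi (a \<circ> b) = chi b" using hom[OF a b] nz[OF a] by simp
        then show "(inverse (chi a) * chi (a \<circ> b)) *s (a \<circ> b) x = chi b *s a (b x)" by simp
      qed
      also have "\<dots> = inverse (chi a) *s w"
        unfolding w_def by (simp add: vec.scale_sum_right vector_smult_assoc)
      finally show ?thesis .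
    qed
    have pw: "polar Q w u1 = of_nat (card A) * polar Q x u1"
    proof -
      have "polar Q w u1 = (\<Sum>b\<in>A. chi b * polar Q (b x) u1)"
        unfolding w_def by (simp add: polar_sum_l[OF qf] polar_scale_l[OF qf])
      also have "\<dots> = (\<Sum>b\<in>A. polar Q x u1)"
      proof (rule sum.cong)
        fix b assume b: "b \<in> A"
        have bu: "b u1 = chi b *s u1" using u12(1) b unfolding E_def by simp
        have "b (inverse (chi b) *s u1) = u1"
          using bu nz[OF b] vec.linear_scale[OF lin[OF b]] by (simp add: vector_smult_assoc)
        then have "polar Q (b x) u1 = polar Q x (inverse (chi b) *s u1)"
          using iso_polar[OF qf, of b x "inverse (chi b) *s u1"] AG b by auto
        then show "chi b * polar Q (b x) u1 = polar Q x u1"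
          using nz[OF b] by (simp add: polar_scale_r[OF qf])
      qed simp
      finally show ?thesis by simp
    qed
    have pw1: "polar Q u1 w \<noteq> 0" using pw Nnz x polar_sym[OF qf] by simp
    have wnz: "w \<noteq> 0" using pw1 polar_0_r[OF qf] by auto
    define u where "u = polar Q u2 w *s u1 - polar Q u1 w *s u2"
    have uE: "u \<in> E" unfolding u_def using subE u12 by (intro vec.subspace_diff vec.subspace_scale) auto
    have puw: "polar Q u w = 0"
      unfolding u_def by (simp add: polar_diff_l[OF qf] polar_scale_l[OF qf])
    have unz: "u \<noteq> 0"
    proof
      assume "u = 0"
      then have "polar Q u1 w *s u2 = polar Q u2 w *s u1" unfolding u_def by simp
      moreover have "u2 = inverse (polar Q u1 w) *s (polar Q u1 w *s u2)"
        using pw1 by (simp add: vector_smult_assoc)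
      ultimately have e: "u2 = inverse (polar Q u1 w) *s (polar Q u2 w *s u1)" by simp
      have "u1 \<in> vec.span {u1}" by (rule vec.span_base) simp
      then have "inverse (polar Q u1 w) *s (polar Q u2 w *s u1) \<in> vec.span {u1}"
        by (intro vec.span_scale)
      then have "u2 \<in> vec.span {u1}" using e by simp
      moreover have "u2 \<notin> vec.span {u1}"
        using u12(3,4) vec.independent_insert[of u2 "{u1}"] by (simp add: insert_commute)
      ultimately show False by blast
    qed
    have a0u: "a0 u = L *s u" using uE a0 unfolding E_def L_def by blast
    have a0w: "a0 w = inverse L *s w" using wE[OF a0(1)] L_def by simp
    have Qu: "Q u = 0"
    proof -
      have "Q u = L^2 * Q u" using iso_Q[OF qf, of a0 u] AG a0 a0u Q_scale[OF qf] by auto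
      then have "(L^2 - 1) * Q u = 0" by (simp add: left_diff_distrib)
      then show ?thesis using L2 by simp
    qed
    have Qw: "Q w = 0"
    proof -
      have "Q w = (inverse L)^2 * Q w" using iso_Q[OF qf, of a0 w] AG a0 a0w Q_scale[OF qf] by auto
      then have "((inverse L)^2 - 1) * Q w = 0" by (simp add: left_diff_distrib)
      moreover have "(inverse L)^2 \<noteq> 1" using L2 by (simp add: power_inverse)
      ultimately show ?thesis by simp
    qed
    have wns: "w \<notin> vec.span {u}"
    proof
      assume "w \<in> vec.span {u}"
      then obtain k where k: "w = k *s u" unfolding vec.span_singleton by auto
      have "a0 w = L *s w" unfolding k using a0u vec.linear_scale[OF lin[OF a0(1)]]
        by (simp add: vector_smult_assoc mult.commute)
      then have "L *s w = inverse L *s w" using a0w by auto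
      then have "(L - inverse L) *s w = 0" by (simp add: vector_sub_rdistrib)
      then have "L - inverse L = 0" using wnz by simp
      then have "L = inverse L" by simp
      then have "L * L = L * inverse L" by simp
      also have "\<dots> = 1" using Lnz by simp
      finally have "L * L = 1" .
      then show False using L2 by (simp add: power2_eq_square)
    qed
    have ind: "vec.independent {u, w}" "u \<noteq> w"
      using indep_pair[OF qf unz wns] by (auto simp: insert_commute)
    show ?thesis
    proof (rule root_found[OF qf Qu Qw puw ind AG], intro ballI)
      fix a assume a: "a \<in> A"
      have "a u = chi a *s u" using uE a unfolding E_def by simp
      then show "\<exists>c. c \<noteq> 0 \<and> a u = c *s u \<and> a w = inverse c *s w"
        using nz[OF a] wE[OF a] by (intro exI[of _ "chi a"]) simp
    qed
  qed
  have part2: "\<exists>R. is_root_group Q R \<and> R \<subseteq> centralizer (isometry_group Q) A"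
    if H: "multiplicity_char A (\<lambda>_. 1) \<ge> 4"
  proof -
    define E where "E = {v. \<forall>a\<in>A. a v = (\<lambda>_. 1::'a) a *s v}"
    have subE: "vec.subspace E" unfolding E_def by (rule eigen_subspace[OF qf AG])
    have dE: "4 \<le> vec.dim E" using H unfolding multiplicity_char_def E_def .
    have d2: "2 \<le> vec.dim E" using dE by simp
    then obtain u1 u2 where u12: "u1 \<in> E" "u2 \<in> E" "u1 \<noteq> u2" "vec.independent {u1, u2}"
      by (rule two_indep)
    obtain u where u: "u \<in> vec.span {u1, u2}" "u \<noteq> 0" "Q u = 0"
      using quad_root[OF qf u12(4,3)] by blast
    have uE: "u \<in> E" using u(1) vec.span_minimal[of "{u1,u2}" E] subE u12 by auto
    define S where "S = E \<inter> {v. polar Q u v = 0}"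
    have subS: "vec.subspace S" unfolding S_def
      using vec.subspace_inter subE kernel_subspace[OF qf] by blast
    have uS: "u \<in> S" unfolding S_def using uE u(3) polar_self[OF qf] by simp
    have dS: "3 \<le> vec.dim S"
    proof (cases "\<exists>q\<in>E. polar Q u q \<noteq> 0")
      case True
      then obtain q where q: "q \<in> E" "polar Q u q \<noteq> 0" by blast
      have "E \<subseteq> vec.span (insert q S)"
      proof
        fix p assume p: "p \<in> E"
        let ?k = "polar Q u p / polar Q u q"
        have "p - ?k *s q \<in> E" using subE p q by (intro vec.subspace_diff vec.subspace_scale) auto
        moreover have "polar Q u (p - ?k *s q) = 0"
          using q(2) by (simp add: polar_diff_r[OF qf] polar_scale_r[OF qf])
        ultimately have "p - ?k *s q \<in> S" unfolding S_def by simp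
        then show "p \<in> vec.span (insert q S)"
          unfolding vec.span_insert using vec.span_base by blast
      qed
      then have "vec.dim E \<le> vec.dim (insert q S)" by (rule vec.dim_mono)
      also have "\<dots> \<le> vec.dim S + 1" by (simp add: vec.dim_insert)
      finally show ?thesis using dE by simp
    next
      case False
      then have "S = E" unfolding S_def by auto
      then show ?thesis using dE by simp
    qed
    have iu: "vec.independent {u}" using u(2) vec.dependent_single by simp
    have su: "{u} \<subseteq> S" using uS by simp
    obtain B where B: "{u} \<subseteq> B" "B \<subseteq> S" "vec.independent B" "S \<subseteq> vec.span B"
      by (rule vec.maximal_independent_subset_extend[OF su iu])
    have cB: "card B = vec.dim S" using vec.basis_card_eq_dim[OF B(2,4,3)] .
    have finB: "finite B" using B(3) vec.finiteI_independent by blast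
    have c2: "2 \<le> card (B - {u})" using cB dS finB B(1) by (simp add: card_Diff_singleton)
    have finB': "finite (B - {u})" using finB by simp
    obtain y z where yz: "y \<in> B - {u}" "z \<in> B - {u}" "y \<noteq> z"
      by (rule two_elems[OF finB' c2])
    have i3: "vec.independent {u, y, z}" using vec.independent_mono[OF B(3)] yz B(1) by auto
    have iyz: "vec.independent {y, z}" and uns: "u \<notin> vec.span {y, z}"
      using i3 yz vec.independent_insert[of u "{y, z}"] by auto
    obtain v where v: "v \<in> vec.span {y, z}" "v \<noteq> 0" "Q v = 0"
      using quad_root[OF qf iyz yz(3)] by blast
    have "vec.span {y, z} \<subseteq> S" using vec.span_minimal[of "{y, z}" S] subS yz B(2) by auto
    then have vS: "v \<in> S" using v(1) by blast
    have "vec.span {v} \<subseteq> vec.span {y, z}"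
      using vec.span_minimal[of "{v}" "vec.span {y, z}"] vec.subspace_span v(1) by auto
    then have "u \<notin> vec.span {v}" using uns by blast
    then have ind: "vec.independent {u, v}" "u \<noteq> v" using indep_pair[OF qf v(2)] by auto
    have puv: "polar Q u v = 0" using vS unfolding S_def by simp
    show ?thesis
    proof (rule root_found[OF qf u(3) v(3) puv ind AG], intro ballI)
      fix a assume a: "a \<in> A"
      show "\<exists>c. c \<noteq> 0 \<and> a u = c *s u \<and> a v = inverse c *s v"
      proof (intro exI[of _ 1] conjI)
        show "a u = 1 *s u" using uE a unfolding E_def by simp
        show "a v = inverse 1 *s v" using vS a unfolding E_def S_def by simp
      qed simp
    qed
  qed
  show ?thesis using part1 part2 by blast
qed


end
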